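(* For any policy $\pi$, any model $W$, any non-negative cost $c$ and any state $x_0$ such that $V^\pi(x_0;c,W^\star)<\infty$ and $J^\pi_h(x;c,W)<\infty$ for all $x,h$, $$J^\pi(x_0;c,W^\star)-J^\pi(x_0;c,W)\le\sqrt{H\,V^\pi(x_0;c,W^\star)}\;\sqrt{\mathbb E\Big[\sum_{h=0}^{H-1}\min\Big\{\tfrac{1}{\sigma^2}\big\|(W^\star-W)\phi(x_h,u_h)\big\|_2^2,\,1\Big\}\Big]},$$ where the expectation is over trajectories of $\pi$ in the model $W^\star$ started at $x_0$.
   Context: $\mathcal X=\mathbb R^{d_{\mathcal X}}$, $\mathcal U$ an arbitrary set, $\phi:\mathcal X\times\mathcal U\to\mathcal H$ a feature map into a Hilbert space; for a bounded linear $W:\mathcal H\to\mathbb R^{d_{\mathcal X}}$ the model $W$ has dynamics $x_{h+1}=W\phi(x_h,u_h)+\epsilon_h$, $\epsilon_h\sim\mathcal N(0,\sigma^2I)$ i.i.d., $h=0,\dots,H-1$ ($\sigma>0$). $W^\star$ is the true model. A policy is $\pi:\mathcal X\times\{0,\dots,H-1\}\to\mathcal U$, $u_h=\pi(x_h,h)$. Cost-to-go $J^\pi_h(x;c,W)=\mathbb E[\sum_{\ell=h}^{H-1}c(x_\ell,u_\ell)\mid\pi,x_h=x,W]$, $J^\pi=J^\pi_0$, and $V^\pi(x_0;c,W^\star)=\mathbb E[(\sum_{h=0}^{H-1}c(x_h,u_h))^2\mid x_0,\pi,W^\star]$. *)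

theory Defs
  imports "HOL-Analysis.Analysis" "HOL-Probability.Probability"
begin

definition gauss :: "real ^ 'd \<Rightarrow> real \<Rightarrow> (real ^ 'd) measure" where
  "gauss m \<sigma> = density lborel
     (\<lambda>y. ennreal (\<Prod>i\<in>UNIV. normal_density (m $ i) \<sigma> (y $ i)))"

definition stepK ::
  "('h \<Rightarrow> real ^ 'd) \<Rightarrow> (real ^ 'd \<Rightarrow> 'u \<Rightarrow> 'h) \<Rightarrow> (real ^ 'd \<Rightarrow> nat \<Rightarrow> 'u)
   \<Rightarrow> real \<Rightarrow> nat \<Rightarrow> real ^ 'd \<Rightarrow> (real ^ 'd) measure" where
  "stepK W \<phi> \<pi> \<sigma> l x = gauss (W (\<phi> x (\<pi> x l))) \<sigma>"

text \<open>Law of the state path (x_h, ..., x_{h+k}) started at x_h = x at time h,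
  as a measure on the product space over the time indices {h..h+k}.\<close>
primrec pathM ::
  "(nat \<Rightarrow> real ^ 'd \<Rightarrow> (real ^ 'd) measure) \<Rightarrow> nat \<Rightarrow> nat \<Rightarrow> real ^ 'd
   \<Rightarrow> (nat \<Rightarrow> real ^ 'd) measure" where
  "pathM K h 0 x = return (PiM {h..h} (\<lambda>_. borel)) (\<lambda>i\<in>{h..h}. x)"
| "pathM K h (Suc k) x =
     pathM K h k x \<bind> (\<lambda>\<omega>. distr (K (h + k) (\<omega> (h + k))) (PiM {h..h + Suc k} (\<lambda>_. borel))
                              (\<lambda>y. fun_upd \<omega> (h + Suc k) y))"

definition traj ::
  "('h \<Rightarrow> real ^ 'd) \<Rightarrow> (real ^ 'd \<Rightarrow> 'u \<Rightarrow> 'h) \<Rightarrow> (real ^ 'd \<Rightarrow> nat \<Rightarrow> 'u)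
   \<Rightarrow> real \<Rightarrow> nat \<Rightarrow> nat \<Rightarrow> real ^ 'd \<Rightarrow> (nat \<Rightarrow> real ^ 'd) measure" where
  "traj W \<phi> \<pi> \<sigma> H h x = pathM (stepK W \<phi> \<pi> \<sigma>) h (H - h) x"

definition Jh ::
  "('h \<Rightarrow> real ^ 'd) \<Rightarrow> (real ^ 'd \<Rightarrow> 'u \<Rightarrow> 'h) \<Rightarrow> (real ^ 'd \<Rightarrow> nat \<Rightarrow> 'u)
   \<Rightarrow> real \<Rightarrow> nat \<Rightarrow> (real ^ 'd \<Rightarrow> 'u \<Rightarrow> real) \<Rightarrow> nat \<Rightarrow> real ^ 'd \<Rightarrow> ennreal" where
  "Jh W \<phi> \<pi> \<sigma> H c h x =
     (\<integral>\<^sup>+ \<omega>. ennreal (\<Sum>l\<in>{h..<H}. c (\<omega> l) (\<pi> (\<omega> l) l)) \<partial>traj W \<phi> \<pi> \<sigma> H h x)"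

definition Vsec ::
  "('h \<Rightarrow> real ^ 'd) \<Rightarrow> (real ^ 'd \<Rightarrow> 'u \<Rightarrow> 'h) \<Rightarrow> (real ^ 'd \<Rightarrow> nat \<Rightarrow> 'u)
   \<Rightarrow> real \<Rightarrow> nat \<Rightarrow> (real ^ 'd \<Rightarrow> 'u \<Rightarrow> real) \<Rightarrow> real ^ 'd \<Rightarrow> ennreal" where
  "Vsec W \<phi> \<pi> \<sigma> H c x0 =
     (\<integral>\<^sup>+ \<omega>. ennreal ((\<Sum>l<H. c (\<omega> l) (\<pi> (\<omega> l) l))\<^sup>2) \<partial>traj W \<phi> \<pi> \<sigma> H 0 x0)"

end

theory Submission
  imports Defs
begin


lemma gauss_nn_eq:
  fixes f :: "'d::finite \<Rightarrow> real \<Rightarrow> real"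
  assumes that: "\<And>i. f i \<in> borel_measurable borel" "\<And>i x. 0 \<le> f i x"
  shows "(\<integral>\<^sup>+ y. ennreal (\<Prod>i\<in>UNIV. f i ((y::real^'d) $ i)) \<partial>lborel) = (\<Prod>i\<in>UNIV. \<integral>\<^sup>+ x. ennreal (f i x) \<partial>lborel)"
proof -
  define F where "F = (\<lambda>b::real^'d. \<lambda>x. ennreal (f (SOME i. b = axis i 1) x))"
  have inj: "inj (\<lambda>i::'d. axis i (1::real))"
    by (auto simp: inj_def axis_eq_axis)
  have B: "(Basis :: (real^'d) set) = (\<lambda>i. axis i 1) ` UNIV"
    by (auto simp: Basis_vec_def)
  have Fa: "F (axis i 1) x = ennreal (f i x)" for i x
    unfolding F_def by (auto simp: axis_eq_axis)
  have "(\<integral>\<^sup>+ y. (\<Prod>b\<in>Basis. F b (y \<bullet> b)) \<partial>lborel) = (\<Prod>b\<in>Basis. \<integral>\<^sup>+ x. F b x \<partial>lborel)"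
    by (rule nn_integral_lborel_prod) (auto simp: B Fa that)
  moreover have "(\<Prod>b\<in>Basis. F b (y \<bullet> b)) = ennreal (\<Prod>i\<in>UNIV. f i (y $ i))" for y :: "real^'d"
    unfolding B by (subst prod.reindex[OF inj]) (auto simp: Fa cart_eq_inner_axis[symmetric] prod_ennreal that)
  moreover have "(\<Prod>b\<in>Basis. \<integral>\<^sup>+ x. F b x \<partial>lborel) = (\<Prod>i\<in>UNIV. \<integral>\<^sup>+ x. ennreal (f i x) \<partial>lborel)"
    unfolding B by (subst prod.reindex[OF inj]) (simp add: Fa[abs_def] F_def axis_eq_axis)
  ultimately show ?thesis by simp
qed

lemma vec_nth_measurable[measurable (raw)]:
  fixes f :: "'a \<Rightarrow> real^'n"
  shows "f \<in> borel_measurable M \<Longrightarrow> (\<lambda>x. f x $ i) \<in> borel_measurable M"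
proof -
  assume f: "f \<in> borel_measurable M"
  have "(\<lambda>x::real^'n. x $ i) \<in> borel_measurable borel"
    by (intro borel_measurable_continuous_onI continuous_on_component continuous_on_id)
  from measurable_compose[OF f this] show ?thesis by simp
qed

definition gq :: "real \<Rightarrow> real ^ 'd \<Rightarrow> real ^ 'd \<Rightarrow> real" where
  "gq \<sigma> m y = (\<Prod>i\<in>UNIV. normal_density (m $ i) \<sigma> (y $ i))"

lemma gq_nonneg: "0 \<le> gq \<sigma> m y"
  by (simp add: gq_def prod_nonneg)

lemma gq_pos: "\<sigma> > 0 \<Longrightarrow> 0 < gq \<sigma> m y"
  by (simp add: gq_def prod_pos normal_density_pos)

lemma gq_measurable[measurable]:
  "(\<lambda>(m, y). gq \<sigma> m y) \<in> borel_measurable (borel \<Otimes>\<^sub>M borel)"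
  unfolding gq_def normal_density_def by measurable

lemma gq_measurable2[measurable]:
  assumes [measurable]: "f \<in> borel_measurable M" "g \<in> borel_measurable M"
  shows "(\<lambda>x. gq \<sigma> (f x) (g x)) \<in> borel_measurable M"
  unfolding gq_def normal_density_def by measurable

lemma gauss_gq: "gauss m \<sigma> = density lborel (\<lambda>y. ennreal (gq \<sigma> m y))"
  by (simp add: gauss_def gq_def)

lemma sets_gauss[simp, measurable_cong]: "sets (gauss m \<sigma>) = sets borel"
  by (simp add: gauss_def)

lemma space_gauss[simp]: "space (gauss m \<sigma>) = UNIV"
  by (simp add: gauss_def)

lemma nn_integral_gauss:
  assumes "f \<in> borel_measurable borel"
  shows "(\<integral>\<^sup>+ y. f y \<partial>gauss m \<sigma>) = (\<integral>\<^sup>+ y. ennreal (gq \<sigma> m y) * f y \<partial>lborel)"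
  unfolding gauss_gq using assms by (subst nn_integral_density) auto

lemma nn_integral_normal_density: "\<sigma> > 0 \<Longrightarrow> (\<integral>\<^sup>+ x. ennreal (normal_density \<mu> \<sigma> x) \<partial>lborel) = 1"
  by (subst nn_integral_eq_integral) (auto intro: integrable_normal_density)

lemma nn_integral_gq: "\<sigma> > 0 \<Longrightarrow> (\<integral>\<^sup>+ y. ennreal (gq \<sigma> (m::real^'d) y) \<partial>lborel) = 1"
  unfolding gq_def by (subst gauss_nn_eq) (auto simp: nn_integral_normal_density)

lemma prob_space_gauss: "\<sigma> > 0 \<Longrightarrow> prob_space (gauss m \<sigma>)"
  by (rule prob_spaceI) (simp add: gauss_gq emeasure_density nn_integral_gq)

lemma gauss_kernel[measurable]:
  "\<sigma> > 0 \<Longrightarrow> (\<lambda>m. gauss m \<sigma>) \<in> measurable borel (subprob_algebra borel)"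
proof -
  assume \<sigma>: "\<sigma> > 0"
  show ?thesis
proof (rule measurable_subprob_algebra)
  fix m :: "real^'d" show "subprob_space (gauss m \<sigma>)"
    using prob_space_gauss[of \<sigma> m] \<sigma> by (simp add: prob_space_imp_subprob_space)
next
  fix A :: "(real^'d) set" assume [measurable]: "A \<in> sets borel"
  have "(\<lambda>m. \<integral>\<^sup>+ y. ennreal (gq \<sigma> m y) * indicator A y \<partial>lborel) \<in> borel_measurable borel"
    by measurable
  then show "(\<lambda>m. emeasure (gauss m \<sigma>) A) \<in> borel_measurable borel"
    by (simp add: gauss_gq emeasure_density)
qed simp
qed



lemma sqrt_prod: "finite A \<Longrightarrow> sqrt (prod f A) = prod (\<lambda>i. sqrt (f i)) A"
  by (induct rule: finite_induct) (simp_all add: real_sqrt_mult)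

lemma sqrt_exp: "sqrt (exp x) = exp (x / 2)"
proof -
  have "exp x = exp (x/2) * exp (x/2)" by (simp add: exp_add[symmetric])
  then show ?thesis by (simp add: real_sqrt_mult_self)
qed

lemma sqrt_nd_prod:
  assumes "\<sigma> > 0"
  shows "sqrt (normal_density \<mu>1 \<sigma> y * normal_density \<mu>2 \<sigma> y)
       = exp (-(\<mu>1 - \<mu>2)\<^sup>2 / (8 * \<sigma>\<^sup>2)) * normal_density ((\<mu>1 + \<mu>2) / 2) \<sigma> y"
proof -
  define c where "c = 1 / sqrt (2 * pi * \<sigma>\<^sup>2)"
  have c: "c \<ge> 0" by (simp add: c_def)
  have "normal_density \<mu>1 \<sigma> y * normal_density \<mu>2 \<sigma> y
      = (c * c) * exp (-(y - \<mu>1)\<^sup>2 / (2 * \<sigma>\<^sup>2) + -(y - \<mu>2)\<^sup>2 / (2 * \<sigma>\<^sup>2))"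
    by (simp add: normal_density_def c_def exp_add[symmetric] exp_diff)
  then have "sqrt (normal_density \<mu>1 \<sigma> y * normal_density \<mu>2 \<sigma> y)
      = c * exp ((-(y - \<mu>1)\<^sup>2 / (2 * \<sigma>\<^sup>2) + -(y - \<mu>2)\<^sup>2 / (2 * \<sigma>\<^sup>2)) / 2)"
    using c by (simp add: real_sqrt_mult real_sqrt_mult_self sqrt_exp)
  also have "(-(y - \<mu>1)\<^sup>2 / (2 * \<sigma>\<^sup>2) + -(y - \<mu>2)\<^sup>2 / (2 * \<sigma>\<^sup>2)) / 2
      = -(\<mu>1 - \<mu>2)\<^sup>2 / (8 * \<sigma>\<^sup>2) + -(y - (\<mu>1 + \<mu>2) / 2)\<^sup>2 / (2 * \<sigma>\<^sup>2)"
    using assms by (simp add: field_simps power2_eq_square)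
  finally show ?thesis
    by (simp add: normal_density_def c_def exp_add[symmetric] exp_diff)
qed

lemma norm_vec_sq: "(norm (x :: real^'d))\<^sup>2 = (\<Sum>i\<in>UNIV. (x $ i)\<^sup>2)"
  unfolding norm_vec_def L2_set_def by (simp add: sum_nonneg)

lemma sqrt_gq_prod:
  assumes "\<sigma> > 0"
  shows "sqrt (gq \<sigma> m1 y * gq \<sigma> m2 y)
       = exp (-(norm (m1 - m2))\<^sup>2 / (8 * \<sigma>\<^sup>2)) * gq \<sigma> ((1/2) *\<^sub>R (m1 + m2)) y"
proof -
  have "sqrt (gq \<sigma> m1 y * gq \<sigma> m2 y)
      = (\<Prod>i\<in>UNIV. sqrt (normal_density (m1 $ i) \<sigma> (y $ i) * normal_density (m2 $ i) \<sigma> (y $ i)))"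
    unfolding gq_def prod.distrib[symmetric] by (simp add: sqrt_prod)
  also have "\<dots> = (\<Prod>i\<in>UNIV. exp (-(m1 $ i - m2 $ i)\<^sup>2 / (8 * \<sigma>\<^sup>2)) * normal_density ((m1 $ i + m2 $ i) / 2) \<sigma> (y $ i))"
    using assms by (simp add: sqrt_nd_prod)
  also have "\<dots> = exp (\<Sum>i\<in>UNIV. -(m1 $ i - m2 $ i)\<^sup>2 / (8 * \<sigma>\<^sup>2)) * gq \<sigma> ((1/2) *\<^sub>R (m1 + m2)) y"
    by (simp add: prod.distrib exp_sum gq_def add_divide_distrib)
  also have "(\<Sum>i\<in>UNIV. -(m1 $ i - m2 $ i)\<^sup>2 / (8 * \<sigma>\<^sup>2)) = -(norm (m1 - m2))\<^sup>2 / (8 * \<sigma>\<^sup>2)"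
    by (simp add: norm_vec_sq sum_divide_distrib[symmetric] sum_negf)
  finally show ?thesis .
qed

definition gg :: "real \<Rightarrow> real ^ 'd \<Rightarrow> real ^ 'd \<Rightarrow> real ^ 'd \<Rightarrow> real" where
  "gg \<sigma> m1 m2 y = (if gq \<sigma> m2 y < gq \<sigma> m1 y then 1 - gq \<sigma> m2 y / gq \<sigma> m1 y else 0)"

lemma gg_measurable[measurable]:
  assumes [measurable]: "f \<in> borel_measurable M" "g \<in> borel_measurable M" "h \<in> borel_measurable M"
  shows "(\<lambda>x. gg \<sigma> (f x) (g x) (h x)) \<in> borel_measurable M"
  unfolding gg_def by measurable

lemma gg_nonneg: "\<sigma> > 0 \<Longrightarrow> 0 \<le> gg \<sigma> m1 m2 y"
  using gq_pos[of \<sigma> m1 y] gq_nonneg[of \<sigma> m2 y] by (simp add: gg_def)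

lemma gg_le1: "\<sigma> > 0 \<Longrightarrow> gg \<sigma> m1 m2 y \<le> 1"
  using gq_pos[of \<sigma> m1 y] gq_nonneg[of \<sigma> m2 y] by (simp add: gg_def)

lemma gauss_lower:
  assumes \<sigma>: "\<sigma> > 0" and f[measurable]: "f \<in> borel_measurable borel"
  shows "(\<integral>\<^sup>+ y. f y * ennreal (1 - gg \<sigma> m1 m2 y) \<partial>gauss m1 \<sigma>) \<le> (\<integral>\<^sup>+ y. f y \<partial>gauss m2 \<sigma>)"
proof -
  have "(\<integral>\<^sup>+ y. f y * ennreal (1 - gg \<sigma> m1 m2 y) \<partial>gauss m1 \<sigma>)
      = (\<integral>\<^sup>+ y. ennreal (gq \<sigma> m1 y) * (f y * ennreal (1 - gg \<sigma> m1 m2 y)) \<partial>lborel)"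
    by (rule nn_integral_gauss) measurable
  also have "\<dots> \<le> (\<integral>\<^sup>+ y. ennreal (gq \<sigma> m2 y) * f y \<partial>lborel)"
  proof (rule nn_integral_mono)
    fix y
    have "gq \<sigma> m1 y * (1 - gg \<sigma> m1 m2 y) \<le> gq \<sigma> m2 y"
      using gq_pos[of \<sigma> m1 y, OF \<sigma>] gq_nonneg[of \<sigma> m2 y] using gq_pos[of \<sigma> m1 y, OF \<sigma>] gq_nonneg[of \<sigma> m2 y] by (cases "gq \<sigma> m2 y < gq \<sigma> m1 y") (simp_all add: gg_def algebra_simps)
    then have "ennreal (gq \<sigma> m1 y) * ennreal (1 - gg \<sigma> m1 m2 y) \<le> ennreal (gq \<sigma> m2 y)"
      using gq_nonneg[of \<sigma> m1 y] by (simp add: ennreal_mult'[symmetric] ennreal_leI)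
    then show "ennreal (gq \<sigma> m1 y) * (f y * ennreal (1 - gg \<sigma> m1 m2 y)) \<le> ennreal (gq \<sigma> m2 y) * f y"
      by (metis mult.assoc mult.commute mult_left_mono zero_le)
  qed
  also have "\<dots> = (\<integral>\<^sup>+ y. f y \<partial>gauss m2 \<sigma>)"
    by (rule nn_integral_gauss[symmetric]) measurable
  finally show ?thesis .
qed

lemma gg_sq_pointwise:
  assumes \<sigma>: "\<sigma> > 0"
  shows "gq \<sigma> m1 y * (gg \<sigma> m1 m2 y)\<^sup>2 \<le> 4 * (sqrt (gq \<sigma> m1 y) - sqrt (gq \<sigma> m2 y))\<^sup>2"
proof (cases "gq \<sigma> m2 y < gq \<sigma> m1 y")
  case True
  define a where "a = sqrt (gq \<sigma> m1 y)"
  define b where "b = sqrt (gq \<sigma> m2 y)"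
  have a: "a > 0" using gq_pos[OF \<sigma>] by (simp add: a_def)
  have b: "b \<ge> 0" by (simp add: b_def gq_nonneg)
  have ab: "b < a" using True by (simp add: a_def b_def)
  have q: "gq \<sigma> m1 y = a\<^sup>2" by (simp add: a_def gq_nonneg)
  have p: "gq \<sigma> m2 y = b\<^sup>2" by (simp add: b_def gq_nonneg)
  have "gq \<sigma> m1 y * (gg \<sigma> m1 m2 y)\<^sup>2 = (a - b)\<^sup>2 * ((a + b)\<^sup>2 / a\<^sup>2)"
    proof -
    have a2: "a\<^sup>2 \<noteq> 0" using a by simp
    have "gg \<sigma> m1 m2 y = (a\<^sup>2 - b\<^sup>2) / a\<^sup>2" using True a2 unfolding gg_def q p by (simp add: field_simps)
    then have "gq \<sigma> m1 y * (gg \<sigma> m1 m2 y)\<^sup>2 = (a\<^sup>2 - b\<^sup>2)\<^sup>2 / a\<^sup>2"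
      using a2 by (simp add: q power_divide power2_eq_square)
    also have "(a\<^sup>2 - b\<^sup>2)\<^sup>2 = (a - b)\<^sup>2 * (a + b)\<^sup>2" by algebra
    finally show ?thesis by simp
  qed
  also have "(a + b)\<^sup>2 / a\<^sup>2 \<le> 4"
  proof -
    have "(a + b)\<^sup>2 \<le> (2 * a)\<^sup>2" using a b ab by (intro power_mono) auto
    then show ?thesis using a by (simp add: field_simps)
  qed
  then have "(a - b)\<^sup>2 * ((a + b)\<^sup>2 / a\<^sup>2) \<le> (a - b)\<^sup>2 * 4"
    by (intro mult_left_mono) auto
  finally show ?thesis by (simp add: a_def b_def mult.commute)
qed (simp add: gg_def)

lemma exp_bound: "8 * (1 - exp (- (t / 8))) \<le> (t::real)"
  using exp_ge_add_one_self[of "-(t/8)"] by simp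

lemma gauss_gg_sq:
  assumes \<sigma>: "\<sigma> > 0"
  shows "(\<integral>\<^sup>+ y. ennreal ((gg \<sigma> m1 m2 y)\<^sup>2) \<partial>gauss m1 \<sigma>) \<le> ennreal (min ((norm (m1 - m2))\<^sup>2 / \<sigma>\<^sup>2) 1)"
proof -
  let ?q = "gq \<sigma> m1" and ?p = "gq \<sigma> m2" and ?r = "gq \<sigma> ((1/2) *\<^sub>R (m1 + m2))"
  define e where "e = exp (-(norm (m1 - m2))\<^sup>2 / (8 * \<sigma>\<^sup>2))"
  define h where "h = (\<lambda>y. (sqrt (?q y) - sqrt (?p y))\<^sup>2)"
  have e0: "e \<ge> 0" by (simp add: e_def)
  have [measurable]: "h \<in> borel_measurable borel" unfolding h_def by measurable
  have pw: "?q y + ?p y = h y + 2 * e * ?r y" for y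
  proof -
    have "sqrt (?q y) * sqrt (?p y) = e * ?r y"
      using sqrt_gq_prod[OF \<sigma>, of m1 y m2] by (simp add: e_def real_sqrt_mult)
    moreover have "(sqrt (?q y))\<^sup>2 = ?q y" "(sqrt (?p y))\<^sup>2 = ?p y" by (simp_all add: gq_nonneg)
    ultimately show ?thesis unfolding h_def by (simp add: power2_diff)
  qed
  have "(\<integral>\<^sup>+ y. ennreal (?q y + ?p y) \<partial>lborel) = 2"
    using \<sigma> by (simp add: nn_integral_add gq_nonneg nn_integral_gq)
  also have "(\<integral>\<^sup>+ y. ennreal (?q y + ?p y) \<partial>lborel)
      = (\<integral>\<^sup>+ y. ennreal (h y) \<partial>lborel) + (\<integral>\<^sup>+ y. ennreal (2 * e) * ennreal (?r y) \<partial>lborel)"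
    proof -
    have "\<And>y. ennreal (h y + 2 * e * ?r y) = ennreal (h y) + ennreal (2 * e) * ennreal (?r y)"
    proof -
      fix y
      have h0: "h y \<ge> 0" by (simp add: h_def)
      have "ennreal (h y + 2 * e * ?r y) = ennreal (h y) + ennreal (2 * e * ?r y)"
        using h0 e0 gq_nonneg by (intro ennreal_plus) (auto intro: mult_nonneg_nonneg)
      also have "ennreal (2 * e * ?r y) = ennreal (2 * e) * ennreal (?r y)"
        using e0 gq_nonneg by (intro ennreal_mult) auto
      finally show "ennreal (h y + 2 * e * ?r y) = ennreal (h y) + ennreal (2 * e) * ennreal (?r y)" .
    qed
    then have "(\<integral>\<^sup>+ y. ennreal (?q y + ?p y) \<partial>lborel) = (\<integral>\<^sup>+ y. ennreal (h y) + ennreal (2 * e) * ennreal (?r y) \<partial>lborel)"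
      by (simp add: pw)
    also have "\<dots> = (\<integral>\<^sup>+ y. ennreal (h y) \<partial>lborel) + (\<integral>\<^sup>+ y. ennreal (2 * e) * ennreal (?r y) \<partial>lborel)"
      by (rule nn_integral_add) auto
    finally show ?thesis .
  qed
  also have "(\<integral>\<^sup>+ y. ennreal (2 * e) * ennreal (?r y) \<partial>lborel) = ennreal (2 * e)"
    using \<sigma> by (simp add: nn_integral_cmult nn_integral_gq)
  finally have H: "(\<integral>\<^sup>+ y. ennreal (h y) \<partial>lborel) + ennreal (2 * e) = 2" .
  then have Hfin: "(\<integral>\<^sup>+ y. ennreal (h y) \<partial>lborel) \<noteq> \<infinity>" by auto
  then obtain Hr where Hr: "(\<integral>\<^sup>+ y. ennreal (h y) \<partial>lborel) = ennreal Hr" "Hr \<ge> 0"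
    using ennreal_cases[of "(\<integral>\<^sup>+ y. ennreal (h y) \<partial>lborel)"] by auto
  from H have "ennreal (Hr + 2 * e) = ennreal 2" using Hr e0 by (simp add: ennreal_plus)
  then have Hr2: "Hr = 2 - 2 * e" using Hr e0 by (subst (asm) ennreal_inj) auto
  have "(\<integral>\<^sup>+ y. ennreal ((gg \<sigma> m1 m2 y)\<^sup>2) \<partial>gauss m1 \<sigma>)
      = (\<integral>\<^sup>+ y. ennreal (?q y) * ennreal ((gg \<sigma> m1 m2 y)\<^sup>2) \<partial>lborel)"
    by (rule nn_integral_gauss) measurable
  also have "\<dots> \<le> (\<integral>\<^sup>+ y. ennreal (4 * h y) \<partial>lborel)"
    by (intro nn_integral_mono) (auto simp: ennreal_mult'[symmetric] gq_nonneg h_def intro!: ennreal_leI gg_sq_pointwise[OF \<sigma>])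
  also have "(\<lambda>y. ennreal (4 * h y)) = (\<lambda>y. 4 * ennreal (h y))"
    by (auto simp: h_def ennreal_mult)
  also have "(\<integral>\<^sup>+ y. 4 * ennreal (h y) \<partial>lborel) = ennreal (4 * (2 - 2 * e))"
  proof -
    have "e \<le> 1" using Hr Hr2 by simp
    then have "ennreal (4 * (2 - 2 * e)) = ennreal 4 * ennreal (2 - 2 * e)"
      by (intro ennreal_mult) auto
    then show ?thesis using Hr by (simp add: nn_integral_cmult Hr2)
  qed
  also have "\<dots> \<le> ennreal ((norm (m1 - m2))\<^sup>2 / \<sigma>\<^sup>2)"
    using exp_bound[of "(norm (m1 - m2))\<^sup>2 / \<sigma>\<^sup>2"] \<sigma>
    by (intro ennreal_leI) (simp add: e_def mult.commute)
  finally have A: "(\<integral>\<^sup>+ y. ennreal ((gg \<sigma> m1 m2 y)\<^sup>2) \<partial>gauss m1 \<sigma>) \<le> ennreal ((norm (m1 - m2))\<^sup>2 / \<sigma>\<^sup>2)" .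
  have "(\<integral>\<^sup>+ y. ennreal ((gg \<sigma> m1 m2 y)\<^sup>2) \<partial>gauss m1 \<sigma>) \<le> (\<integral>\<^sup>+ y. 1 \<partial>gauss m1 \<sigma>)"
    using gg_nonneg[OF \<sigma>] gg_le1[OF \<sigma>]
    by (intro nn_integral_mono) (auto intro!: power_le_one)
  also have "\<dots> = 1"
    using prob_space.emeasure_space_1[OF prob_space_gauss[OF \<sigma>]] by simp
  finally have B: "(\<integral>\<^sup>+ y. ennreal ((gg \<sigma> m1 m2 y)\<^sup>2) \<partial>gauss m1 \<sigma>) \<le> 1" .
  show ?thesis using A B by (cases "(norm (m1 - m2))\<^sup>2 / \<sigma>\<^sup>2 \<le> 1") (auto simp: min_def)
qed



lemma sets_pathM[simp, measurable_cong]: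
  "sets (pathM K h k x) = sets (PiM {h..h+k} (\<lambda>_. borel :: (real^'d) measure))"
proof (induct k)
  case 0 then show ?case by simp
next
  case (Suc k)
  have ne: "space (pathM K h k x) \<noteq> {}"
    using sets_eq_imp_space_eq[OF Suc] by (simp add: space_PiM PiE_eq_empty_iff)
  show ?case by (simp only: pathM.simps) (rule sets_bind[OF _ ne], simp)
qed

lemma space_pathM[simp]:
  "space (pathM K h k x) = space (PiM {h..h+k} (\<lambda>_. borel :: (real^'d) measure))"
  by (rule sets_eq_imp_space_eq) simp

lemma measurable_upd:
  fixes j :: nat
  assumes "j \<notin> I"
  shows "(\<lambda>(\<omega>, y). fun_upd \<omega> j y) \<in> measurable (PiM I (\<lambda>_. borel) \<Otimes>\<^sub>M borel) (PiM (insert j I) (\<lambda>_. borel :: (real^'d) measure))"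
proof -
  have "(\<lambda>p i. (fun_upd (fst p) j (snd p)) i) \<in> measurable (PiM I (\<lambda>_. borel) \<Otimes>\<^sub>M borel) (PiM (insert j I) (\<lambda>_. borel :: (real^'d) measure))"
  proof (rule measurable_PiM_single')
    fix i assume i: "i \<in> insert j I"
    show "(\<lambda>p. (fun_upd (fst p) j (snd p)) i) \<in> measurable (PiM I (\<lambda>_. borel) \<Otimes>\<^sub>M borel) borel"
    proof (cases "i = j")
      case True then show ?thesis by simp
    next
      case False
      then have "i \<in> I" using i by simp
      then show ?thesis using False by simp
    qed
  next
    show "(\<lambda>p i. (fun_upd (fst p) j (snd p)) i) \<in> space (PiM I (\<lambda>_. borel) \<Otimes>\<^sub>M borel) \<rightarrow> (\<Pi>\<^sub>E i\<in>insert j I. space (borel :: (real^'d) measure))"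
      by (auto simp: space_pair_measure space_PiM PiE_def extensional_def)
  qed
  then show ?thesis by (simp add: case_prod_beta')
qed

lemma ivl_Suc: "{h..h + Suc k} = insert (h + Suc k) {h..h+k}"
  by auto

lemma nn_integral_pathM_Suc:
  fixes K :: "nat \<Rightarrow> real^'d \<Rightarrow> (real^'d) measure"
  assumes Kmeas: "\<And>l. K l \<in> measurable borel (subprob_algebra borel)"
    and f[measurable]: "f \<in> borel_measurable (PiM {h..h+Suc k} (\<lambda>_. borel :: (real^'d) measure))"
  shows "(\<integral>\<^sup>+ \<omega>. f \<omega> \<partial>pathM K h (Suc k) x)
       = (\<integral>\<^sup>+ \<omega>. \<integral>\<^sup>+ y. f (fun_upd \<omega> (h + Suc k) y) \<partial>K (h+k) (\<omega> (h+k)) \<partial>pathM K h k x)"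
proof -
  let ?P = "PiM {h..h+k} (\<lambda>_. borel :: (real^'d) measure)"
  let ?Q = "PiM {h..h+Suc k} (\<lambda>_. borel :: (real^'d) measure)"
  have upd: "(\<lambda>(\<omega>, y). fun_upd \<omega> (h + Suc k) y) \<in> measurable (?P \<Otimes>\<^sub>M borel) ?Q"
    unfolding ivl_Suc by (rule measurable_upd) auto
  have upd': "(\<lambda>(\<omega>, y). fun_upd \<omega> (h + Suc k) y) \<in> measurable (pathM K h k x \<Otimes>\<^sub>M borel) ?Q"
    by (subst measurable_cong_sets[OF sets_pair_measure_cong[OF sets_pathM refl] refl]) (rule upd)
  have g: "(\<lambda>\<omega>. K (h+k) (\<omega> (h+k))) \<in> measurable (pathM K h k x) (subprob_algebra borel)"
  proof -
    have "(\<lambda>\<omega>. K (h+k) (\<omega> (h+k))) \<in> measurable ?P (subprob_algebra borel)"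
    proof -
      have c: "(\<lambda>\<omega>. \<omega> (h+k)) \<in> measurable ?P borel" by (rule measurable_component_singleton) simp
      show ?thesis using measurable_compose[OF c Kmeas] .
    qed
    then show ?thesis by (subst measurable_cong_sets[OF sets_pathM refl])
  qed
  have N: "(\<lambda>\<omega>. distr (K (h+k) (\<omega> (h+k))) ?Q (\<lambda>y. fun_upd \<omega> (h + Suc k) y)) \<in> measurable (pathM K h k x) (subprob_algebra ?Q)"
    using measurable_distr2[OF upd' g] by simp
  have "(\<integral>\<^sup>+ \<omega>. f \<omega> \<partial>pathM K h (Suc k) x)
     = (\<integral>\<^sup>+ \<omega>. \<integral>\<^sup>+ y. f y \<partial>distr (K (h+k) (\<omega> (h+k))) ?Q (\<lambda>y. fun_upd \<omega> (h + Suc k) y) \<partial>pathM K h k x)"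
    by (simp only: pathM.simps) (rule nn_integral_bind[OF f N])
  also have "\<dots> = (\<integral>\<^sup>+ \<omega>. \<integral>\<^sup>+ y. f (fun_upd \<omega> (h + Suc k) y) \<partial>K (h+k) (\<omega> (h+k)) \<partial>pathM K h k x)"
  proof (rule nn_integral_cong)
    fix \<omega> assume \<omega>: "\<omega> \<in> space (pathM K h k x)"
    have sK: "sets (K (h+k) (\<omega> (h+k))) = sets borel"
      using g \<omega> by (rule sets_kernel)
    have "(\<lambda>y. fun_upd \<omega> (h + Suc k) y) \<in> measurable borel ?Q"
      using measurable_Pair2[OF upd, of \<omega>] \<omega> by simp
    then have m: "(\<lambda>y. fun_upd \<omega> (h + Suc k) y) \<in> measurable (K (h+k) (\<omega> (h+k))) ?Q"
      by (subst measurable_cong_sets[OF sK refl])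
    show "(\<integral>\<^sup>+ y. f y \<partial>distr (K (h+k) (\<omega> (h+k))) ?Q (\<lambda>y. fun_upd \<omega> (h + Suc k) y))
        = (\<integral>\<^sup>+ y. f (fun_upd \<omega> (h + Suc k) y) \<partial>K (h+k) (\<omega> (h+k)))"
      by (rule nn_integral_distr[OF m]) (subst measurable_cong_sets[OF sets_distr refl], rule f)
  qed
  finally show ?thesis .
qed

lemma pathM_marginal:
  fixes K :: "nat \<Rightarrow> real^'d \<Rightarrow> (real^'d) measure"
  assumes Kmeas: "\<And>l. K l \<in> measurable borel (subprob_algebra borel)"
    and Kprob: "\<And>l z. prob_space (K l z)"
    and Fm: "\<And>k'. k \<le> k' \<Longrightarrow> F \<in> borel_measurable (PiM {h..h+k'} (\<lambda>_. borel :: (real^'d) measure))"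
    and Finv: "\<And>\<omega> n y. h + k < n \<Longrightarrow> F (fun_upd \<omega> n y) = F \<omega>"
    and kk: "k \<le> k'"
  shows "(\<integral>\<^sup>+ \<omega>. F \<omega> \<partial>pathM K h k' x) = (\<integral>\<^sup>+ \<omega>. F \<omega> \<partial>pathM K h k x)"
  using kk
proof (induct k' rule: dec_induct)
  case base then show ?case by simp
next
  case (step k')
  have "(\<integral>\<^sup>+ \<omega>. F \<omega> \<partial>pathM K h (Suc k') x)
      = (\<integral>\<^sup>+ \<omega>. \<integral>\<^sup>+ y. F (fun_upd \<omega> (h + Suc k') y) \<partial>K (h+k') (\<omega> (h+k')) \<partial>pathM K h k' x)"
    by (rule nn_integral_pathM_Suc[OF Kmeas Fm]) (use step in simp)
  also have "\<dots> = (\<integral>\<^sup>+ \<omega>. F \<omega> \<partial>pathM K h k' x)"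
  proof (rule nn_integral_cong)
    fix \<omega>
    have "(\<integral>\<^sup>+ y. F (fun_upd \<omega> (h + Suc k') y) \<partial>K (h+k') (\<omega> (h+k'))) = (\<integral>\<^sup>+ y. F \<omega> \<partial>K (h+k') (\<omega> (h+k')))"
      using step by (intro nn_integral_cong) (simp add: Finv)
    also have "\<dots> = F \<omega>"
      using prob_space.emeasure_space_1[OF Kprob] by simp
    finally show "(\<integral>\<^sup>+ y. F (fun_upd \<omega> (h + Suc k') y) \<partial>K (h+k') (\<omega> (h+k'))) = F \<omega>" .
  qed
  finally show ?case using step by simp
qed



locale setting =
  fixes \<sigma> :: real and ms mw :: "nat \<Rightarrow> real^'d \<Rightarrow> real^'d"
  assumes \<sigma>: "\<sigma> > 0"
    and msm[measurable]: "\<And>l. ms l \<in> borel_measurable borel"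
    and mwm[measurable]: "\<And>l. mw l \<in> borel_measurable borel"
begin

definition Ks where "Ks l z = gauss (ms l z) \<sigma>"
definition Kw where "Kw l z = gauss (mw l z) \<sigma>"

lemma Ks_meas: "Ks l \<in> measurable borel (subprob_algebra borel)"
  unfolding Ks_def[abs_def] using measurable_compose[OF msm gauss_kernel[OF \<sigma>]] .

lemma Kw_meas: "Kw l \<in> measurable borel (subprob_algebra borel)"
  unfolding Kw_def[abs_def] using measurable_compose[OF mwm gauss_kernel[OF \<sigma>]] .

lemma Ks_prob: "prob_space (Ks l z)"
  unfolding Ks_def using prob_space_gauss[OF \<sigma>] .

lemma Kw_prob: "prob_space (Kw l z)"
  unfolding Kw_def using prob_space_gauss[OF \<sigma>] .

definition g where "g j \<omega> = gg \<sigma> (ms j (\<omega> j)) (mw j (\<omega> j)) (\<omega> (Suc j))"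

definition G where "G k \<omega> = (\<Sum>j<k. g j \<omega>)"

lemma g_nonneg: "0 \<le> g j \<omega>" unfolding g_def using gg_nonneg[OF \<sigma>] .
lemma g_le1: "g j \<omega> \<le> 1" unfolding g_def using gg_le1[OF \<sigma>] .
lemma G_nonneg: "0 \<le> G k \<omega>" unfolding G_def by (simp add: sum_nonneg g_nonneg)

lemma g_meas: "Suc j \<le> k' \<Longrightarrow> g j \<in> borel_measurable (PiM {0..k'} (\<lambda>_. borel :: (real^'d) measure))"
proof -
  assume j: "Suc j \<le> k'"
  have [measurable]: "(\<lambda>\<omega>. \<omega> j) \<in> measurable (PiM {0..k'} (\<lambda>_. borel :: (real^'d) measure)) borel"
    by (rule measurable_component_singleton) (use j in simp)
  have [measurable]: "(\<lambda>\<omega>. \<omega> (Suc j)) \<in> measurable (PiM {0..k'} (\<lambda>_. borel :: (real^'d) measure)) borel"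
    by (rule measurable_component_singleton) (use j in simp)
  show ?thesis unfolding g_def[abs_def] by measurable
qed

lemma G_meas: "k \<le> k' \<Longrightarrow> G k \<in> borel_measurable (PiM {0..k'} (\<lambda>_. borel :: (real^'d) measure))"
  unfolding G_def[abs_def] by (intro borel_measurable_sum g_meas) auto

lemma g_upd: "Suc j < k \<Longrightarrow> g j (fun_upd \<omega> k y) = g j \<omega>"
  by (simp add: g_def)

lemma G_upd: "G (Suc k) (fun_upd \<omega> (Suc k) y) = G k \<omega> + gg \<sigma> (ms k (\<omega> k)) (mw k (\<omega> k)) y"
proof -
  have "(\<Sum>j<k. g j (fun_upd \<omega> (Suc k) y)) = (\<Sum>j<k. g j \<omega>)"
    by (intro sum.cong) (auto simp: g_upd)
  then show ?thesis by (simp add: G_def g_def)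
qed

lemma ennreal_1_minus: 
  assumes "0 \<le> a" "0 \<le> b" "b \<le> 1"
  shows "ennreal (1 - (a + b)) \<le> ennreal (1 - a) * ennreal (1 - b)"
proof (cases "a \<le> 1")
  case True
  have "1 - (a + b) \<le> (1 - a) * (1 - b)" using assms True by (simp add: algebra_simps)
  then show ?thesis using True assms by (simp add: ennreal_mult'[symmetric] ennreal_leI)
next
  case False
  then have "1 - (a + b) \<le> 0" using assms by simp
  then have "ennreal (1 - (a + b)) = 0" by (simp add: ennreal_eq_0_iff)
  then show ?thesis by simp
qed

lemma upd_meas0: "(\<lambda>(\<omega>, y). fun_upd \<omega> (Suc k) y) \<in> measurable (PiM {0..k} (\<lambda>_. borel) \<Otimes>\<^sub>M borel) (PiM {0..Suc k} (\<lambda>_. borel :: (real^'d) measure))"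
proof -
  have e: "{0..Suc k} = insert (Suc k) {0..k}" by auto
  show ?thesis unfolding e by (rule measurable_upd) simp
qed

lemma upd_meas1:
  assumes f: "f \<in> borel_measurable (PiM {0..Suc k} (\<lambda>_. borel :: (real^'d) measure))"
    and \<omega>: "\<omega> \<in> space (PiM {0..k} (\<lambda>_. borel :: (real^'d) measure))"
  shows "(\<lambda>y. f (fun_upd \<omega> (Suc k) y)) \<in> borel_measurable (borel :: (real^'d) measure)"
  using measurable_Pair2[OF measurable_compose[OF upd_meas0 f] \<omega>] by simp

lemma comp_meas:
  assumes "Suc j \<le> k"
  shows "(\<lambda>\<omega>. \<omega> j) \<in> measurable (PiM {0..k} (\<lambda>_. borel :: (real^'d) measure)) borel"
  by (rule measurable_component_singleton) (use assms in simp)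

lemma F_meas:
  fixes K :: "nat \<Rightarrow> real^'d \<Rightarrow> (real^'d) measure"
  assumes Kmeas: "K k \<in> measurable borel (subprob_algebra borel)"
    and f: "f \<in> borel_measurable (PiM {0..Suc k} (\<lambda>_. borel :: (real^'d) measure))"
  shows "(\<lambda>\<omega>. \<integral>\<^sup>+ y. f (fun_upd \<omega> (Suc k) y) \<partial>K k (\<omega> k)) \<in> borel_measurable (PiM {0..k} (\<lambda>_. borel :: (real^'d) measure))"
proof (rule nn_integral_measurable_subprob_algebra2[where N = borel])
  show "(\<lambda>(\<omega>, y). f (fun_upd \<omega> (Suc k) y)) \<in> borel_measurable (PiM {0..k} (\<lambda>_. borel) \<Otimes>\<^sub>M borel)"
    using measurable_compose[OF upd_meas0 f] by (simp add: case_prod_beta')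
  have c: "(\<lambda>\<omega>. \<omega> k) \<in> measurable (PiM {0..k} (\<lambda>_. borel :: (real^'d) measure)) borel"
    by (rule measurable_component_singleton) simp
  show "(\<lambda>\<omega>. K k (\<omega> k)) \<in> measurable (PiM {0..k} (\<lambda>_. borel)) (subprob_algebra borel)"
    using measurable_compose[OF c Kmeas] .
qed

lemma lower_bound:
  "f \<in> borel_measurable (PiM {0..k} (\<lambda>_. borel :: (real^'d) measure)) \<Longrightarrow>
   (\<integral>\<^sup>+ \<omega>. f \<omega> * ennreal (1 - G k \<omega>) \<partial>pathM Ks 0 k x) \<le> (\<integral>\<^sup>+ \<omega>. f \<omega> \<partial>pathM Kw 0 k x)"
proof (induct k arbitrary: f)
  case 0 then show ?case by (simp add: G_def)
next
  case (Suc k)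
  note f[measurable] = Suc.prems
  let ?P = "PiM {0..k} (\<lambda>_. borel :: (real^'d) measure)"
  define F where "F \<omega> = (\<integral>\<^sup>+ y. f (fun_upd \<omega> (Suc k) y) \<partial>Kw k (\<omega> k))" for \<omega>
  have Fm: "F \<in> borel_measurable ?P"
    unfolding F_def[abs_def] by (rule F_meas[OF Kw_meas f])
  have Gm[measurable]: "G (Suc k) \<in> borel_measurable (PiM {0..Suc k} (\<lambda>_. borel :: (real^'d) measure))"
    by (rule G_meas) simp
  have m1: "(\<lambda>\<omega>. f \<omega> * ennreal (1 - G (Suc k) \<omega>)) \<in> borel_measurable (PiM {0..0 + Suc k} (\<lambda>_. borel :: (real^'d) measure))"
    by simp
  have "(\<integral>\<^sup>+ \<omega>. f \<omega> * ennreal (1 - G (Suc k) \<omega>) \<partial>pathM Ks 0 (Suc k) x)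
      = (\<integral>\<^sup>+ \<omega>. \<integral>\<^sup>+ y. f (fun_upd \<omega> (Suc k) y) * ennreal (1 - G (Suc k) (fun_upd \<omega> (Suc k) y)) \<partial>Ks k (\<omega> k) \<partial>pathM Ks 0 k x)"
    using nn_integral_pathM_Suc[OF Ks_meas m1, where x=x] by simp
  also have "\<dots> \<le> (\<integral>\<^sup>+ \<omega>. ennreal (1 - G k \<omega>) * \<integral>\<^sup>+ y. f (fun_upd \<omega> (Suc k) y) * ennreal (1 - gg \<sigma> (ms k (\<omega> k)) (mw k (\<omega> k)) y) \<partial>Ks k (\<omega> k) \<partial>pathM Ks 0 k x)"
  proof (rule nn_integral_mono)
    fix \<omega> assume \<omega>': "\<omega> \<in> space (pathM Ks 0 k x)"
    then have \<omega>: "\<omega> \<in> space ?P" by simp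
    have fm: "(\<lambda>y. f (fun_upd \<omega> (Suc k) y)) \<in> borel_measurable (borel :: (real^'d) measure)"
      by (rule upd_meas1[OF f \<omega>])
    have "(\<integral>\<^sup>+ y. f (fun_upd \<omega> (Suc k) y) * ennreal (1 - G (Suc k) (fun_upd \<omega> (Suc k) y)) \<partial>Ks k (\<omega> k))
        \<le> (\<integral>\<^sup>+ y. ennreal (1 - G k \<omega>) * (f (fun_upd \<omega> (Suc k) y) * ennreal (1 - gg \<sigma> (ms k (\<omega> k)) (mw k (\<omega> k)) y)) \<partial>Ks k (\<omega> k))"
    proof (rule nn_integral_mono)
      fix y
      have "ennreal (1 - G (Suc k) (fun_upd \<omega> (Suc k) y)) \<le> ennreal (1 - G k \<omega>) * ennreal (1 - gg \<sigma> (ms k (\<omega> k)) (mw k (\<omega> k)) y)"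
        unfolding G_upd by (rule ennreal_1_minus[OF G_nonneg gg_nonneg[OF \<sigma>] gg_le1[OF \<sigma>]])
      then have "f (fun_upd \<omega> (Suc k) y) * ennreal (1 - G (Suc k) (fun_upd \<omega> (Suc k) y))
          \<le> f (fun_upd \<omega> (Suc k) y) * (ennreal (1 - G k \<omega>) * ennreal (1 - gg \<sigma> (ms k (\<omega> k)) (mw k (\<omega> k)) y))"
        by (rule mult_left_mono) simp
      then show "f (fun_upd \<omega> (Suc k) y) * ennreal (1 - G (Suc k) (fun_upd \<omega> (Suc k) y))
          \<le> ennreal (1 - G k \<omega>) * (f (fun_upd \<omega> (Suc k) y) * ennreal (1 - gg \<sigma> (ms k (\<omega> k)) (mw k (\<omega> k)) y))"
        by (simp add: ac_simps)
    qed
    also have "\<dots> = ennreal (1 - G k \<omega>) * (\<integral>\<^sup>+ y. f (fun_upd \<omega> (Suc k) y) * ennreal (1 - gg \<sigma> (ms k (\<omega> k)) (mw k (\<omega> k)) y) \<partial>Ks k (\<omega> k))"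
    proof (rule nn_integral_cmult)
      have gm: "(\<lambda>y. ennreal (1 - gg \<sigma> (ms k (\<omega> k)) (mw k (\<omega> k)) y)) \<in> borel_measurable (borel :: (real^'d) measure)"
      proof -
        have "(\<lambda>y. gg \<sigma> (ms k (\<omega> k)) (mw k (\<omega> k)) y) \<in> borel_measurable (borel :: (real^'d) measure)"
          by (rule gg_measurable[where f = "\<lambda>_. ms k (\<omega> k)" and g = "\<lambda>_. mw k (\<omega> k)" and h = "\<lambda>y. y"]) simp_all
        then have m2: "(\<lambda>y. 1 - gg \<sigma> (ms k (\<omega> k)) (mw k (\<omega> k)) y) \<in> borel_measurable (borel :: (real^'d) measure)"
          by (rule borel_measurable_diff[OF borel_measurable_const])
        show ?thesis using measurable_compose[OF m2 measurable_ennreal] by simp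
      qed
      show "(\<lambda>y. f (fun_upd \<omega> (Suc k) y) * ennreal (1 - gg \<sigma> (ms k (\<omega> k)) (mw k (\<omega> k)) y)) \<in> borel_measurable (Ks k (\<omega> k))"
        unfolding Ks_def measurable_cong_sets[OF sets_gauss refl] by (rule borel_measurable_times_ennreal[OF fm gm])
    qed
    finally show "(\<integral>\<^sup>+ y. f (fun_upd \<omega> (Suc k) y) * ennreal (1 - G (Suc k) (fun_upd \<omega> (Suc k) y)) \<partial>Ks k (\<omega> k))
        \<le> ennreal (1 - G k \<omega>) * (\<integral>\<^sup>+ y. f (fun_upd \<omega> (Suc k) y) * ennreal (1 - gg \<sigma> (ms k (\<omega> k)) (mw k (\<omega> k)) y) \<partial>Ks k (\<omega> k))" .
  qed
  also have "\<dots> \<le> (\<integral>\<^sup>+ \<omega>. F \<omega> * ennreal (1 - G k \<omega>) \<partial>pathM Ks 0 k x)"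
  proof (rule nn_integral_mono)
    fix \<omega> assume \<omega>': "\<omega> \<in> space (pathM Ks 0 k x)"
    then have \<omega>: "\<omega> \<in> space ?P" by simp
    have fm: "(\<lambda>y. f (fun_upd \<omega> (Suc k) y)) \<in> borel_measurable (borel :: (real^'d) measure)"
      by (rule upd_meas1[OF f \<omega>])
    have "(\<integral>\<^sup>+ y. f (fun_upd \<omega> (Suc k) y) * ennreal (1 - gg \<sigma> (ms k (\<omega> k)) (mw k (\<omega> k)) y) \<partial>Ks k (\<omega> k)) \<le> F \<omega>"
      unfolding F_def Ks_def Kw_def by (rule gauss_lower[OF \<sigma> fm])
    then have "ennreal (1 - G k \<omega>) * (\<integral>\<^sup>+ y. f (fun_upd \<omega> (Suc k) y) * ennreal (1 - gg \<sigma> (ms k (\<omega> k)) (mw k (\<omega> k)) y) \<partial>Ks k (\<omega> k))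
        \<le> ennreal (1 - G k \<omega>) * F \<omega>"
      by (rule mult_left_mono) simp
    then show "ennreal (1 - G k \<omega>) * (\<integral>\<^sup>+ y. f (fun_upd \<omega> (Suc k) y) * ennreal (1 - gg \<sigma> (ms k (\<omega> k)) (mw k (\<omega> k)) y) \<partial>Ks k (\<omega> k))
        \<le> F \<omega> * ennreal (1 - G k \<omega>)"
      by (simp add: mult.commute)
  qed
  also have "\<dots> \<le> (\<integral>\<^sup>+ \<omega>. F \<omega> \<partial>pathM Kw 0 k x)"
    by (rule Suc.hyps[OF Fm])
  also have "\<dots> = (\<integral>\<^sup>+ \<omega>. f \<omega> \<partial>pathM Kw 0 (Suc k) x)"
  proof -
    have m2: "f \<in> borel_measurable (PiM {0..0 + Suc k} (\<lambda>_. borel :: (real^'d) measure))" using f by simp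
    show ?thesis
      using nn_integral_pathM_Suc[where K=Kw, OF Kw_meas m2, where x=x] by (simp add: F_def del: pathM.simps)
  qed
  finally show ?case .
qed

definition a where "a j \<omega> = min ((norm (ms j (\<omega> j) - mw j (\<omega> j)))\<^sup>2 / \<sigma>\<^sup>2) 1"

lemma a_meas: "j \<le> k' \<Longrightarrow> a j \<in> borel_measurable (PiM {0..k'} (\<lambda>_. borel :: (real^'d) measure))"
proof -
  assume j: "j \<le> k'"
  have [measurable]: "(\<lambda>\<omega>. \<omega> j) \<in> measurable (PiM {0..k'} (\<lambda>_. borel :: (real^'d) measure)) borel"
    by (rule measurable_component_singleton) (use j in simp)
  show ?thesis unfolding a_def[abs_def] by measurable
qed

lemma g_sq_bound:
  assumes jk: "j < k"
  shows "(\<integral>\<^sup>+ \<omega>. ennreal ((g j \<omega>)\<^sup>2) \<partial>pathM Ks 0 k x) \<le> (\<integral>\<^sup>+ \<omega>. ennreal (a j \<omega>) \<partial>pathM Ks 0 k x)"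
proof -
  have "(\<integral>\<^sup>+ \<omega>. ennreal ((g j \<omega>)\<^sup>2) \<partial>pathM Ks 0 k x) = (\<integral>\<^sup>+ \<omega>. ennreal ((g j \<omega>)\<^sup>2) \<partial>pathM Ks 0 (Suc j) x)"
  proof (rule pathM_marginal[OF Ks_meas Ks_prob])
    fix k' assume "Suc j \<le> k'"
    then have [measurable]: "g j \<in> borel_measurable (PiM {0..k'} (\<lambda>_. borel :: (real^'d) measure))" by (rule g_meas)
    show "(\<lambda>\<omega>. ennreal ((g j \<omega>)\<^sup>2)) \<in> borel_measurable (PiM {0..0 + k'} (\<lambda>_. borel :: (real^'d) measure))" by simp
  next
    fix \<omega> :: "nat \<Rightarrow> real^'d" and n y assume "0 + Suc j < n"
    then show "ennreal ((g j (fun_upd \<omega> n y))\<^sup>2) = ennreal ((g j \<omega>)\<^sup>2)" by (simp add: g_def)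
  qed (use jk in simp)
  also have "\<dots> = (\<integral>\<^sup>+ \<omega>. \<integral>\<^sup>+ y. ennreal ((gg \<sigma> (ms j (\<omega> j)) (mw j (\<omega> j)) y)\<^sup>2) \<partial>Ks j (\<omega> j) \<partial>pathM Ks 0 j x)"
  proof -
    have m: "(\<lambda>\<omega>. ennreal ((g j \<omega>)\<^sup>2)) \<in> borel_measurable (PiM {0..0 + Suc j} (\<lambda>_. borel :: (real^'d) measure))"
      using g_meas[of j "Suc j"] by simp
    show ?thesis using nn_integral_pathM_Suc[where K=Ks, OF Ks_meas m, where x=x]
      by (simp add: g_def del: pathM.simps)
  qed
  also have "\<dots> \<le> (\<integral>\<^sup>+ \<omega>. ennreal (a j \<omega>) \<partial>pathM Ks 0 j x)"
    by (intro nn_integral_mono) (simp add: Ks_def a_def gauss_gg_sq[OF \<sigma>])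
  also have "\<dots> = (\<integral>\<^sup>+ \<omega>. ennreal (a j \<omega>) \<partial>pathM Ks 0 k x)"
  proof (rule pathM_marginal[OF Ks_meas Ks_prob, symmetric])
    fix k' assume "j \<le> k'"
    then have [measurable]: "a j \<in> borel_measurable (PiM {0..k'} (\<lambda>_. borel :: (real^'d) measure))" by (rule a_meas)
    show "(\<lambda>\<omega>. ennreal (a j \<omega>)) \<in> borel_measurable (PiM {0..0 + k'} (\<lambda>_. borel :: (real^'d) measure))" by simp
  next
    fix \<omega> :: "nat \<Rightarrow> real^'d" and n y assume "0 + j < n"
    then show "ennreal (a j (fun_upd \<omega> n y)) = ennreal (a j \<omega>)" by (simp add: a_def)
  qed (use jk in simp)
  finally show ?thesis .
qed

lemma a_nonneg: "0 \<le> a j \<omega>" by (simp add: a_def)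

lemma sum_sq_le: "(\<Sum>j<k. (f j :: real))\<^sup>2 \<le> real k * (\<Sum>j<k. (f j)\<^sup>2)"
  using Cauchy_Schwarz_ineq_sum[of f "\<lambda>_. 1" "{..<k}"] by (simp add: mult.commute)

lemma G_sq_bound:
  "(\<integral>\<^sup>+ \<omega>. ennreal ((G k \<omega>)\<^sup>2) \<partial>pathM Ks 0 k x) \<le> of_nat k * (\<integral>\<^sup>+ \<omega>. ennreal (\<Sum>j<k. a j \<omega>) \<partial>pathM Ks 0 k x)"
proof -
  have gm: "\<And>j. j \<in> {..<k} \<Longrightarrow> (\<lambda>\<omega>. ennreal ((g j \<omega>)\<^sup>2)) \<in> borel_measurable (pathM Ks 0 k x)"
  proof -
    fix j assume "j \<in> {..<k}"
    then have [measurable]: "g j \<in> borel_measurable (PiM {0..k} (\<lambda>_. borel :: (real^'d) measure))" by (intro g_meas) simp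
    show "(\<lambda>\<omega>. ennreal ((g j \<omega>)\<^sup>2)) \<in> borel_measurable (pathM Ks 0 k x)"
      by (subst measurable_cong_sets[OF sets_pathM refl]) simp
  qed
  have am: "\<And>j. j \<in> {..<k} \<Longrightarrow> (\<lambda>\<omega>. ennreal (a j \<omega>)) \<in> borel_measurable (pathM Ks 0 k x)"
  proof -
    fix j assume "j \<in> {..<k}"
    then have [measurable]: "a j \<in> borel_measurable (PiM {0..k} (\<lambda>_. borel :: (real^'d) measure))" by (intro a_meas) simp
    show "(\<lambda>\<omega>. ennreal (a j \<omega>)) \<in> borel_measurable (pathM Ks 0 k x)"
      by (subst measurable_cong_sets[OF sets_pathM refl]) simp
  qed
  have "(\<integral>\<^sup>+ \<omega>. ennreal ((G k \<omega>)\<^sup>2) \<partial>pathM Ks 0 k x) \<le> (\<integral>\<^sup>+ \<omega>. of_nat k * (\<Sum>j<k. ennreal ((g j \<omega>)\<^sup>2)) \<partial>pathM Ks 0 k x)"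
  proof (rule nn_integral_mono)
    fix \<omega>
    have "(G k \<omega>)\<^sup>2 \<le> real k * (\<Sum>j<k. (g j \<omega>)\<^sup>2)" unfolding G_def by (rule sum_sq_le)
    then have "ennreal ((G k \<omega>)\<^sup>2) \<le> ennreal (real k * (\<Sum>j<k. (g j \<omega>)\<^sup>2))" by (rule ennreal_leI)
    also have "\<dots> = of_nat k * (\<Sum>j<k. ennreal ((g j \<omega>)\<^sup>2))"
      by (simp add: ennreal_mult sum_nonneg ennreal_of_nat_eq_real_of_nat)
    finally show "ennreal ((G k \<omega>)\<^sup>2) \<le> of_nat k * (\<Sum>j<k. ennreal ((g j \<omega>)\<^sup>2))" .
  qed
  also have "\<dots> = of_nat k * (\<Sum>j<k. \<integral>\<^sup>+ \<omega>. ennreal ((g j \<omega>)\<^sup>2) \<partial>pathM Ks 0 k x)"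
  proof -
    have "(\<integral>\<^sup>+ \<omega>. of_nat k * (\<Sum>j<k. ennreal ((g j \<omega>)\<^sup>2)) \<partial>pathM Ks 0 k x)
        = of_nat k * (\<integral>\<^sup>+ \<omega>. (\<Sum>j<k. ennreal ((g j \<omega>)\<^sup>2)) \<partial>pathM Ks 0 k x)"
      by (intro nn_integral_cmult borel_measurable_sum gm)
    also have "(\<integral>\<^sup>+ \<omega>. (\<Sum>j<k. ennreal ((g j \<omega>)\<^sup>2)) \<partial>pathM Ks 0 k x) = (\<Sum>j<k. \<integral>\<^sup>+ \<omega>. ennreal ((g j \<omega>)\<^sup>2) \<partial>pathM Ks 0 k x)"
      by (rule nn_integral_sum) (rule gm)
    finally show ?thesis .
  qed
  also have "\<dots> \<le> of_nat k * (\<Sum>j<k. \<integral>\<^sup>+ \<omega>. ennreal (a j \<omega>) \<partial>pathM Ks 0 k x)"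
    by (intro mult_left_mono sum_mono g_sq_bound) auto
  also have "\<dots> = of_nat k * (\<integral>\<^sup>+ \<omega>. (\<Sum>j<k. ennreal (a j \<omega>)) \<partial>pathM Ks 0 k x)"
    by (subst nn_integral_sum) (auto intro: am)
  also have "\<dots> = of_nat k * (\<integral>\<^sup>+ \<omega>. ennreal (\<Sum>j<k. a j \<omega>) \<partial>pathM Ks 0 k x)"
    by (simp add: a_nonneg)
  finally show ?thesis .
qed

lemma pathM_one:
  "(\<integral>\<^sup>+ \<omega>. 1 \<partial>pathM Ks 0 k x) = 1"
proof -
  have "(\<integral>\<^sup>+ \<omega>. 1 \<partial>pathM Ks 0 k x) = (\<integral>\<^sup>+ \<omega>. 1 \<partial>pathM Ks 0 0 x)"
    by (rule pathM_marginal[OF Ks_meas Ks_prob]) auto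
  also have "\<dots> = 1"
    by (simp add: prob_space.emeasure_space_1[OF prob_space_return] space_PiM)
  finally show ?thesis .
qed

lemma one_le_split: "0 \<le> (t::real) \<Longrightarrow> 1 \<le> ennreal (1 - t) + ennreal (min t 1)"
proof (cases "t \<le> 1")
  case True
  assume t: "0 \<le> t"
  then have "ennreal (1 - t) + ennreal (min t 1) = ennreal (1 - t + t)" using True by (simp add: ennreal_plus[symmetric])
  then show ?thesis by simp
qed simp

lemma main_bound:
  fixes C :: "(nat \<Rightarrow> real^'d) \<Rightarrow> real"
  assumes Cm[measurable]: "C \<in> borel_measurable (PiM {0..k} (\<lambda>_. borel :: (real^'d) measure))"
    and Cnn: "\<And>\<omega>. 0 \<le> C \<omega>"
    and Jfin: "(\<integral>\<^sup>+ \<omega>. ennreal (C \<omega>) \<partial>pathM Kw 0 k x) < \<infinity>"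
    and Vfin: "(\<integral>\<^sup>+ \<omega>. ennreal ((C \<omega>)\<^sup>2) \<partial>pathM Ks 0 k x) < \<infinity>"
  shows "enn2real (\<integral>\<^sup>+ \<omega>. ennreal (C \<omega>) \<partial>pathM Ks 0 k x) - enn2real (\<integral>\<^sup>+ \<omega>. ennreal (C \<omega>) \<partial>pathM Kw 0 k x)
     \<le> sqrt (real k * enn2real (\<integral>\<^sup>+ \<omega>. ennreal ((C \<omega>)\<^sup>2) \<partial>pathM Ks 0 k x))
       * sqrt (enn2real (\<integral>\<^sup>+ \<omega>. ennreal (\<Sum>j<k. a j \<omega>) \<partial>pathM Ks 0 k x))"
proof -
  let ?Ps = "pathM Ks 0 k x" and ?Pw = "pathM Kw 0 k x"
  define Js where "Js = (\<integral>\<^sup>+ \<omega>. ennreal (C \<omega>) \<partial>?Ps)"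
  define Jw where "Jw = (\<integral>\<^sup>+ \<omega>. ennreal (C \<omega>) \<partial>?Pw)"
  define V where "V = (\<integral>\<^sup>+ \<omega>. ennreal ((C \<omega>)\<^sup>2) \<partial>?Ps)"
  define S where "S = (\<integral>\<^sup>+ \<omega>. ennreal (\<Sum>j<k. a j \<omega>) \<partial>?Ps)"
  define X where "X = (\<integral>\<^sup>+ \<omega>. ennreal (C \<omega>) * ennreal (min (G k \<omega>) 1) \<partial>?Ps)"
  have Gm[measurable]: "G k \<in> borel_measurable (PiM {0..k} (\<lambda>_. borel :: (real^'d) measure))"
    by (rule G_meas) simp
  have am[measurable]: "(\<lambda>\<omega>. \<Sum>j<k. a j \<omega>) \<in> borel_measurable (PiM {0..k} (\<lambda>_. borel :: (real^'d) measure))"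
    by (intro borel_measurable_sum a_meas) simp
  note mc = measurable_cong_sets[OF sets_pathM refl]
  have Cm1: "(\<lambda>\<omega>. ennreal (C \<omega>)) \<in> borel_measurable ?Ps" unfolding mc by simp
  have Gm1: "(\<lambda>\<omega>. ennreal (min (G k \<omega>) 1)) \<in> borel_measurable ?Ps" unfolding mc by simp
  have Gm2: "(\<lambda>\<omega>. ennreal (C \<omega>) * ennreal (1 - G k \<omega>)) \<in> borel_measurable ?Ps" unfolding mc by simp
  have Gm3: "(\<lambda>\<omega>. ennreal (C \<omega>) * ennreal (min (G k \<omega>) 1)) \<in> borel_measurable ?Ps" unfolding mc by simp
  have "Js \<le> (\<integral>\<^sup>+ \<omega>. ennreal (C \<omega>) * ennreal (1 - G k \<omega>) + ennreal (C \<omega>) * ennreal (min (G k \<omega>) 1) \<partial>?Ps)"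
    unfolding Js_def
  proof (rule nn_integral_mono)
    fix \<omega>
    have "ennreal (C \<omega>) * 1 \<le> ennreal (C \<omega>) * (ennreal (1 - G k \<omega>) + ennreal (min (G k \<omega>) 1))"
      by (rule mult_left_mono[OF one_le_split[OF G_nonneg]]) simp
    then show "ennreal (C \<omega>) \<le> ennreal (C \<omega>) * ennreal (1 - G k \<omega>) + ennreal (C \<omega>) * ennreal (min (G k \<omega>) 1)"
      by (simp add: distrib_left)
  qed
  also have "\<dots> = (\<integral>\<^sup>+ \<omega>. ennreal (C \<omega>) * ennreal (1 - G k \<omega>) \<partial>?Ps) + X"
    unfolding X_def by (rule nn_integral_add[OF Gm2 Gm3])
  also have "(\<integral>\<^sup>+ \<omega>. ennreal (C \<omega>) * ennreal (1 - G k \<omega>) \<partial>?Ps) \<le> Jw"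
    unfolding Jw_def by (rule lower_bound) simp
  finally have step1: "Js \<le> Jw + X" by (simp add: add_right_mono)
  have "X\<^sup>2 \<le> (\<integral>\<^sup>+ \<omega>. ennreal (C \<omega>) ^ 2 \<partial>?Ps) * (\<integral>\<^sup>+ \<omega>. ennreal (min (G k \<omega>) 1) ^ 2 \<partial>?Ps)"
    unfolding X_def by (rule Cauchy_Schwarz_nn_integral[OF Cm1 Gm1])
  also have "(\<integral>\<^sup>+ \<omega>. ennreal (C \<omega>) ^ 2 \<partial>?Ps) = V"
    unfolding V_def by (intro nn_integral_cong) (simp add: ennreal_power Cnn)
  also have "(\<integral>\<^sup>+ \<omega>. ennreal (min (G k \<omega>) 1) ^ 2 \<partial>?Ps) \<le> (\<integral>\<^sup>+ \<omega>. ennreal ((G k \<omega>)\<^sup>2) \<partial>?Ps)"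
  proof (rule nn_integral_mono)
    fix \<omega>
    have "(min (G k \<omega>) 1)\<^sup>2 \<le> (G k \<omega>)\<^sup>2"
      using G_nonneg[of k \<omega>] by (intro power_mono) auto
    then show "ennreal (min (G k \<omega>) 1) ^ 2 \<le> ennreal ((G k \<omega>)\<^sup>2)"
      using G_nonneg[of k \<omega>] by (simp add: ennreal_power ennreal_leI)
  qed
  also have "\<dots> \<le> of_nat k * S" unfolding S_def by (rule G_sq_bound)
  finally have step2: "X\<^sup>2 \<le> V * (of_nat k * S)" by (simp add: mult_left_mono)
  have Sle: "S \<le> of_nat k"
  proof -
    have "S \<le> (\<integral>\<^sup>+ \<omega>. of_nat k \<partial>?Ps)"
      unfolding S_def
    proof (rule nn_integral_mono)
      fix \<omega>
      have "(\<Sum>j<k. a j \<omega>) \<le> (\<Sum>j<k. 1)" by (intro sum_mono) (simp add: a_def)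
      then show "ennreal (\<Sum>j<k. a j \<omega>) \<le> of_nat k" by (simp add: ennreal_of_nat_eq_real_of_nat ennreal_leI)
    qed
    also have "\<dots> = of_nat k" using pathM_one[of k x] by (simp add: nn_integral_cmult[of "\<lambda>_. 1", simplified])
    finally show ?thesis .
  qed
  have Sfin: "S < \<infinity>" using Sle by (simp add: le_less_trans of_nat_less_top)
  have Vf: "V < \<infinity>" using Vfin by (simp add: V_def)
  have Jwf: "Jw < \<infinity>" using Jfin by (simp add: Jw_def)
  obtain v where v: "V = ennreal v" "0 \<le> v" using Vf ennreal_cases[of V] by auto
  obtain s where s: "S = ennreal s" "0 \<le> s" using Sfin ennreal_cases[of S] by auto
  obtain jw where jw: "Jw = ennreal jw" "0 \<le> jw" using Jwf ennreal_cases[of Jw] by auto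
  have Xsq: "X\<^sup>2 \<le> ennreal (v * (real k * s))"
    using step2 v s by (simp add: ennreal_mult ennreal_of_nat_eq_real_of_nat)
  have Xf: "X < \<infinity>"
  proof (rule ccontr)
    assume "\<not> X < \<infinity>"
    then have "X = \<top>" by (simp add: top_unique not_less)
    then show False using Xsq by (simp add: power2_eq_square top_unique)
  qed
  obtain xr where xr: "X = ennreal xr" "0 \<le> xr" using Xf ennreal_cases[of X] by auto
  have "xr\<^sup>2 \<le> v * (real k * s)"
    using Xsq xr v s by (simp add: ennreal_power mult_nonneg_nonneg)
  then have xr_le: "xr \<le> sqrt (real k * v) * sqrt s"
    by (simp add: real_le_rsqrt real_sqrt_mult[symmetric] ac_simps)
  have "Js \<le> ennreal (jw + xr)" using step1 jw xr by (simp add: ennreal_plus)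
  then have "enn2real Js \<le> jw + xr" using jw xr by (intro enn2real_leI) auto
  then show ?thesis
    using xr_le jw v s unfolding Js_def[symmetric] Jw_def[symmetric] V_def[symmetric] S_def[symmetric]
    by simp
qed

end



theorem mainTheorem5:
  fixes \<phi> :: "real ^ 'd \<Rightarrow> 'u \<Rightarrow> 'h::{real_inner, complete_space}"
    and Wstar W :: "'h \<Rightarrow> real ^ 'd"
    and \<pi> :: "real ^ 'd \<Rightarrow> nat \<Rightarrow> 'u"
    and c :: "real ^ 'd \<Rightarrow> 'u \<Rightarrow> real"
    and \<sigma> :: real and H :: nat and x0 :: "real ^ 'd"
  assumes "\<sigma> > 0"
    and "bounded_linear Wstar" and "bounded_linear W"
    and "\<And>x u. c x u \<ge> 0"
    and "\<And>h. (\<lambda>x. Wstar (\<phi> x (\<pi> x h))) \<in> borel_measurable borel"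
    and "\<And>h. (\<lambda>x. W (\<phi> x (\<pi> x h))) \<in> borel_measurable borel"
    and "\<And>h. (\<lambda>x. c x (\<pi> x h)) \<in> borel_measurable borel"
    and "Vsec Wstar \<phi> \<pi> \<sigma> H c x0 < \<infinity>"
    and "\<And>x h. Jh W \<phi> \<pi> \<sigma> H c h x < \<infinity>"
  shows "enn2real (Jh Wstar \<phi> \<pi> \<sigma> H c 0 x0) - enn2real (Jh W \<phi> \<pi> \<sigma> H c 0 x0)
         \<le> sqrt (real H * enn2real (Vsec Wstar \<phi> \<pi> \<sigma> H c x0))
           * sqrt (enn2real (\<integral>\<^sup>+ \<omega>. ennreal (\<Sum>l<H.
                 min ((norm ((Wstar - W) (\<phi> (\<omega> l) (\<pi> (\<omega> l) l))))\<^sup>2 / \<sigma>\<^sup>2) 1)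
               \<partial>traj Wstar \<phi> \<pi> \<sigma> H 0 x0))"
proof -
  note asm = assms
  interpret S: setting \<sigma> "\<lambda>l z. Wstar (\<phi> z (\<pi> z l))" "\<lambda>l z. W (\<phi> z (\<pi> z l))"
    by unfold_locales (use asm in auto)
  have Ks: "stepK Wstar \<phi> \<pi> \<sigma> = S.Ks" by (intro ext) (simp add: stepK_def S.Ks_def)
  have Kw: "stepK W \<phi> \<pi> \<sigma> = S.Kw" by (intro ext) (simp add: stepK_def S.Kw_def)
  define C where "C \<omega> = (\<Sum>l<H. c (\<omega> l) (\<pi> (\<omega> l) l))" for \<omega> :: "nat \<Rightarrow> real^'d"
  have Cnn: "\<And>\<omega>. 0 \<le> C \<omega>" unfolding C_def using asm(4) by (simp add: sum_nonneg)
  have Cm: "C \<in> borel_measurable (PiM {0..H} (\<lambda>_. borel :: (real^'d) measure))"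
    unfolding C_def[abs_def]
  proof (intro borel_measurable_sum)
    fix l assume "l \<in> {..<H}"
    then have cl: "(\<lambda>\<omega>. \<omega> l) \<in> measurable (PiM {0..H} (\<lambda>_. borel :: (real^'d) measure)) borel"
      by (intro measurable_component_singleton) simp
    show "(\<lambda>\<omega>. c (\<omega> l) (\<pi> (\<omega> l) l)) \<in> borel_measurable (PiM {0..H} (\<lambda>_. borel :: (real^'d) measure))"
      using measurable_compose[OF cl asm(7)[of l]] .
  qed
  have J1: "Jh Wstar \<phi> \<pi> \<sigma> H c 0 x0 = (\<integral>\<^sup>+ \<omega>. ennreal (C \<omega>) \<partial>pathM S.Ks 0 H x0)"
    by (simp add: Jh_def traj_def Ks C_def atLeast0LessThan)
  have J2: "Jh W \<phi> \<pi> \<sigma> H c 0 x0 = (\<integral>\<^sup>+ \<omega>. ennreal (C \<omega>) \<partial>pathM S.Kw 0 H x0)"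
    by (simp add: Jh_def traj_def Kw C_def atLeast0LessThan)
  have V: "Vsec Wstar \<phi> \<pi> \<sigma> H c x0 = (\<integral>\<^sup>+ \<omega>. ennreal ((C \<omega>)\<^sup>2) \<partial>pathM S.Ks 0 H x0)"
    by (simp add: Vsec_def traj_def Ks C_def)
  have A: "(\<integral>\<^sup>+ \<omega>. ennreal (\<Sum>l<H.
                 min ((norm ((Wstar - W) (\<phi> (\<omega> l) (\<pi> (\<omega> l) l))))\<^sup>2 / \<sigma>\<^sup>2) 1)
               \<partial>traj Wstar \<phi> \<pi> \<sigma> H 0 x0) = (\<integral>\<^sup>+ \<omega>. ennreal (\<Sum>j<H. S.a j \<omega>) \<partial>pathM S.Ks 0 H x0)"
    by (simp add: traj_def Ks S.a_def)
  show ?thesis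
    unfolding J1 J2 V A
    by (rule S.main_bound[OF Cm Cnn]) (use asm(8) asm(9)[of 0 x0] J2 V in auto)
qed


end
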